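(* If $T$ is a tournament and $T$ is a subdigraph of an oriented graph $D$, then for any minimum hull set $S$ of $D$ in the two-path convexity, $|S\cap V(T)|\leq 2$.
   Context: A tournament is an orientation of a complete graph; an oriented graph is an orientation of a finite simple graph. The two-path interval function on $D$ is $I_{P_3}(u,v)=\{u,v\}$ together with all vertices $w$ with $(u,w),(w,v)\in A(D)$ or $(v,w),(w,u)\in A(D)$. For $S\subseteq V(D)$, $I_{P_3}(S)=\bigcup_{u,v\in S}I_{P_3}(u,v)$; $C$ is convex if $I_{P_3}(C)=C$; the convex hull of $S$ is the smallest convex set containing $S$; a hull set is a set whose convex hull is $V(D)$, and a minimum hull set is one of minimum size. *)

theory Defs
  imports Main
begin

definition oriented_graph :: "'a set \<Rightarrow> ('a \<times> 'a) set \<Rightarrow> bool" where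
  "oriented_graph V A \<longleftrightarrow> finite V \<and> A \<subseteq> V \<times> V \<and>
     (\<forall>u. (u, u) \<notin> A) \<and> (\<forall>u v. (u, v) \<in> A \<longrightarrow> (v, u) \<notin> A)"

definition tournament :: "'a set \<Rightarrow> ('a \<times> 'a) set \<Rightarrow> bool" where
  "tournament V A \<longleftrightarrow> oriented_graph V A \<and>
     (\<forall>u\<in>V. \<forall>v\<in>V. u \<noteq> v \<longrightarrow> (u, v) \<in> A \<or> (v, u) \<in> A)"

definition subdigraph :: "'a set \<Rightarrow> ('a \<times> 'a) set \<Rightarrow> 'a set \<Rightarrow> ('a \<times> 'a) set \<Rightarrow> bool" where
  "subdigraph W B V A \<longleftrightarrow> W \<subseteq> V \<and> B \<subseteq> A \<and> B \<subseteq> W \<times> W"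

definition P3_interval :: "('a \<times> 'a) set \<Rightarrow> 'a \<Rightarrow> 'a \<Rightarrow> 'a set" where
  "P3_interval A u v = {u, v} \<union>
     {w. ((u, w) \<in> A \<and> (w, v) \<in> A) \<or> ((v, w) \<in> A \<and> (w, u) \<in> A)}"

definition P3_interval_set :: "('a \<times> 'a) set \<Rightarrow> 'a set \<Rightarrow> 'a set" where
  "P3_interval_set A S = (\<Union>u\<in>S. \<Union>v\<in>S. P3_interval A u v)"

definition P3_convex :: "('a \<times> 'a) set \<Rightarrow> 'a set \<Rightarrow> bool" where
  "P3_convex A C \<longleftrightarrow> P3_interval_set A C = C"

definition P3_hull :: "'a set \<Rightarrow> ('a \<times> 'a) set \<Rightarrow> 'a set \<Rightarrow> 'a set" where
  "P3_hull V A S = \<Inter>{C. C \<subseteq> V \<and> S \<subseteq> C \<and> P3_convex A C}"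

definition P3_hull_set :: "'a set \<Rightarrow> ('a \<times> 'a) set \<Rightarrow> 'a set \<Rightarrow> bool" where
  "P3_hull_set V A S \<longleftrightarrow> S \<subseteq> V \<and> P3_hull V A S = V"

definition P3_min_hull_set :: "'a set \<Rightarrow> ('a \<times> 'a) set \<Rightarrow> 'a set \<Rightarrow> bool" where
  "P3_min_hull_set V A S \<longleftrightarrow> P3_hull_set V A S \<and>
     (\<forall>S'. P3_hull_set V A S' \<longrightarrow> card S \<le> card S')"

end

theory Submission
  imports Defs
begin

lemma three_elems:
  assumes "finite X" "2 < card X"
  shows "\<exists>x y z. x \<in> X \<and> y \<in> X \<and> z \<in> X \<and> x \<noteq> y \<and> x \<noteq> z \<and> y \<noteq> z"
proof -
  obtain T where T: "T \<subseteq> X" "card T = 3"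
    using obtain_subset_with_card_n[of 3 X] assms(2) by auto
  then obtain x y z where "T = {x,y,z}" "x \<noteq> y" "y \<noteq> z" "x \<noteq> z"
    unfolding card_3_iff by blast
  then show ?thesis using T(1) by blast
qed

lemma triple_interval:
  assumes "(x,y) \<in> A \<or> (y,x) \<in> A" "(x,z) \<in> A \<or> (z,x) \<in> A" "(y,z) \<in> A \<or> (z,y) \<in> A"
  shows "x \<in> P3_interval A y z \<or> y \<in> P3_interval A x z \<or> z \<in> P3_interval A x y"
  using assms unfolding P3_interval_def by (cases "(x,y) \<in> A"; cases "(x,z) \<in> A"; cases "(y,z) \<in> A"; simp)

theorem corollary3:
  fixes V W :: "'a set" and A B :: "('a \<times> 'a) set" and S :: "'a set"
  assumes "oriented_graph V A"
    and "tournament W B"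
    and "subdigraph W B V A"
    and "P3_min_hull_set V A S"
  shows "card (S \<inter> W) \<le> 2"
proof (rule ccontr)
  assume "\<not> card (S \<inter> W) \<le> 2"
  hence c: "2 < card (S \<inter> W)" by simp
  have fV: "finite V" using assms(1) unfolding oriented_graph_def by blast
  have SV: "S \<subseteq> V" using assms(4) unfolding P3_min_hull_set_def P3_hull_set_def by blast
  have fS: "finite S" using fV SV finite_subset by blast
  obtain x y z where xyz: "x \<in> S \<inter> W" "y \<in> S \<inter> W" "z \<in> S \<inter> W" "x \<noteq> y" "x \<noteq> z" "y \<noteq> z"
    using three_elems[OF _ c] fS by blast
  have BA: "B \<subseteq> A" using assms(3) unfolding subdigraph_def by blast
  have tw: "\<And>u v. u \<in> W \<Longrightarrow> v \<in> W \<Longrightarrow> u \<noteq> v \<Longrightarrow> (u,v) \<in> A \<or> (v,u) \<in> A"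
    using assms(2) BA unfolding tournament_def by blast
  obtain m p q where mpq: "m \<in> S" "p \<in> S" "q \<in> S" "m \<noteq> p" "m \<noteq> q" "m \<in> P3_interval A p q"
  proof -
    have "x \<in> P3_interval A y z \<or> y \<in> P3_interval A x z \<or> z \<in> P3_interval A x y"
      using triple_interval[OF tw[of x y] tw[of x z] tw[of y z]] xyz by blast
    thus ?thesis
    proof (elim disjE)
      assume "x \<in> P3_interval A y z" thus ?thesis using xyz by (intro that[of x y z]) auto
    next
      assume "y \<in> P3_interval A x z" thus ?thesis using xyz by (intro that[of y x z]) auto
    next
      assume "z \<in> P3_interval A x y" thus ?thesis using xyz by (intro that[of z x y]) auto
    qed
  qed
  have fam: "{C. C \<subseteq> V \<and> S - {m} \<subseteq> C \<and> P3_convex A C} = {C. C \<subseteq> V \<and> S \<subseteq> C \<and> P3_convex A C}"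
  proof (intro set_eqI iffI)
    fix C assume "C \<in> {C. C \<subseteq> V \<and> S - {m} \<subseteq> C \<and> P3_convex A C}"
    hence C: "C \<subseteq> V" "S - {m} \<subseteq> C" "P3_interval_set A C = C"
      unfolding P3_convex_def by auto
    have "p \<in> C" "q \<in> C" using C mpq by auto
    hence "m \<in> P3_interval_set A C" using mpq unfolding P3_interval_set_def by blast
    hence "m \<in> C" using C by simp
    thus "C \<in> {C. C \<subseteq> V \<and> S \<subseteq> C \<and> P3_convex A C}" using C unfolding P3_convex_def by auto
  next
    fix C assume "C \<in> {C. C \<subseteq> V \<and> S \<subseteq> C \<and> P3_convex A C}"
    thus "C \<in> {C. C \<subseteq> V \<and> S - {m} \<subseteq> C \<and> P3_convex A C}" by blast
  qed
  have hh: "P3_hull V A (S - {m}) = P3_hull V A S" unfolding P3_hull_def using fam by simp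
  have hs: "P3_hull V A S = V" using assms(4) unfolding P3_min_hull_set_def P3_hull_set_def by (elim conjE)
  have mn: "\<forall>S'. P3_hull_set V A S' \<longrightarrow> card S \<le> card S'"
    using assms(4) unfolding P3_min_hull_set_def by (elim conjE)
  have "P3_hull_set V A (S - {m})"
    unfolding P3_hull_set_def using hh hs SV by auto
  hence "card S \<le> card (S - {m})" using mn by blast
  moreover have "card (S - {m}) < card S" using fS mpq(1) by (rule card_Diff1_less)
  ultimately show False by simp
qed

end
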